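(* Fix any $\alpha\ge1$ and any constant success probability $p\in(0,1]$. Consider any (possibly randomized) algorithm in the ordinal query model for facility location with uniform opening cost. Suppose that, on every instance and every consistent profile, it outputs with probability at least $p$ a nonempty set $F\subseteq X$ whose facility-location cost is less than $\alpha$ times the optimum. Then it must make $\Omega(n/\alpha)$ distance queries on some $n$-point instance.
   Context: Ordinal query model: $(X,d)$ is a finite metric space with $|X|=n$. Every point $x\in X$ reports a ranking $\pi_x$ of all points of $X$ such that $y$ is ranked above $y'$ only if $d(x,y)\le d(x,y')$ (ties broken arbitrarily); the collection is a profile consistent with $d$. An algorithm receives $X$, the profile, and the opening cost $f>0$ for free. Its only other access to $d$ is by querying the exact value $d(x,y)$ for pairs of its choice; each such value costs one query. Facility location with uniform opening cost $f$: the cost of a nonempty $F\subseteq X$ is $\sum_{x\in X}\min_{c\in F}d(x,c)+f\cdot|F|$, and the optimum is the minimum of this cost over nonempty $F\subseteq X$. *)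

theory Defs
  imports "HOL-Probability.Probability"
begin

text \<open>Points of an n-point space are 0..<n. A metric on it is d :: nat => nat => real
  (values outside the range are fixed to 0, they carry no information).\<close>

definition is_metric :: "nat \<Rightarrow> (nat \<Rightarrow> nat \<Rightarrow> real) \<Rightarrow> bool" where
  "is_metric n d \<longleftrightarrow>
     (\<forall>x<n. d x x = 0) \<and>
     (\<forall>x<n. \<forall>y<n. x \<noteq> y \<longrightarrow> d x y > 0) \<and>
     (\<forall>x<n. \<forall>y<n. d x y = d y x) \<and>
     (\<forall>x<n. \<forall>y<n. \<forall>z<n. d x z \<le> d x y + d y z) \<and>
     (\<forall>x y. n \<le> x \<or> n \<le> y \<longrightarrow> d x y = 0)"

definition consistent_profile :: "nat \<Rightarrow> (nat \<Rightarrow> nat \<Rightarrow> real) \<Rightarrow> (nat \<Rightarrow> nat list) \<Rightarrow> bool" where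
  "consistent_profile n d \<pi> \<longleftrightarrow>
     (\<forall>x<n. distinct (\<pi> x) \<and> set (\<pi> x) = {0..<n} \<and>
        (\<forall>i j. i < j \<and> j < n \<longrightarrow> d x (\<pi> x ! i) \<le> d x (\<pi> x ! j)))"

definition fl_instance :: "nat \<Rightarrow> (nat \<Rightarrow> nat \<Rightarrow> real) \<Rightarrow> (nat \<Rightarrow> nat list) \<Rightarrow> real \<Rightarrow> bool" where
  "fl_instance n d \<pi> f \<longleftrightarrow> is_metric n d \<and> consistent_profile n d \<pi> \<and> f > 0"

definition fl_cost :: "nat \<Rightarrow> (nat \<Rightarrow> nat \<Rightarrow> real) \<Rightarrow> real \<Rightarrow> nat set \<Rightarrow> real" where
  "fl_cost n d f F = (\<Sum>x<n. Min ((\<lambda>c. d x c) ` F)) + f * real (card F)"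

definition fl_opt :: "nat \<Rightarrow> (nat \<Rightarrow> nat \<Rightarrow> real) \<Rightarrow> real \<Rightarrow> real" where
  "fl_opt n d f = Min {fl_cost n d f F | F. F \<noteq> {} \<and> F \<subseteq> {0..<n}}"

text \<open>Deterministic adaptive query algorithms (decision trees): either output a set,
  or query the exact distance d x y and continue depending on the answer.\<close>

datatype qalg = Output "nat set" | Query nat nat "real \<Rightarrow> qalg"

primrec run_output :: "qalg \<Rightarrow> (nat \<Rightarrow> nat \<Rightarrow> real) \<Rightarrow> nat set" where
  "run_output (Output F) d = F"
| "run_output (Query x y k) d = run_output (k (d x y)) d"

primrec num_queries :: "qalg \<Rightarrow> (nat \<Rightarrow> nat \<Rightarrow> real) \<Rightarrow> nat" where
  "num_queries (Output F) d = 0"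
| "num_queries (Query x y k) d = Suc (num_queries (k (d x y)) d)"

text \<open>A randomized algorithm: a seed \<omega> drawn from a probability space M; given the
  (free) input n, profile, opening cost f and the seed it is a deterministic decision tree.\<close>

definition approx_succeeds ::
  "'r measure \<Rightarrow> (nat \<Rightarrow> (nat \<Rightarrow> nat list) \<Rightarrow> real \<Rightarrow> 'r \<Rightarrow> qalg) \<Rightarrow> nat \<Rightarrow> real \<Rightarrow> real \<Rightarrow> bool" where
  "approx_succeeds M A n \<alpha> p \<longleftrightarrow>
     (\<forall>d \<pi> f. fl_instance n d \<pi> f \<longrightarrow>
        (\<exists>E\<in>sets M. measure M E \<ge> p \<and>
           (\<forall>\<omega>\<in>E. let F = run_output (A n \<pi> f \<omega>) d in
               F \<noteq> {} \<and> F \<subseteq> {0..<n} \<and> fl_cost n d f F < \<alpha> * fl_opt n d f)))"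

end

theory Submission imports Defs begin

definition dd :: "nat \<Rightarrow> nat \<Rightarrow> nat \<Rightarrow> real \<Rightarrow> real \<Rightarrow> nat \<Rightarrow> nat \<Rightarrow> real" where
"dd n k g \<delta> D x y = (if x < n \<and> y < n then (if x = y then 0 else
   if x div k = y div k \<and> x div k \<noteq> g then \<delta> else D) else 0)"

definition rk :: "nat \<Rightarrow> nat \<Rightarrow> nat \<Rightarrow> nat" where
"rk k x y = (if y = x then 0 else if y div k = x div k then 1 else 2)"

definition prof :: "nat \<Rightarrow> nat \<Rightarrow> nat \<Rightarrow> nat list" where
"prof n k x = sort_key (rk k x) [0..<n]"

lemma dd_metric: assumes "0 < \<delta>" "\<delta> \<le> D" shows "is_metric n (dd n k g \<delta> D)"
  using assms unfolding is_metric_def dd_def by auto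

lemma dd_mono: assumes "0 \<le> \<delta>" "\<delta> \<le> D" "x < n" "y < n" "y' < n" "rk k x y \<le> rk k x y'"
  shows "dd n k g \<delta> D x y \<le> dd n k g \<delta> D x y'"
  using assms unfolding dd_def rk_def by (auto split: if_splits)

lemma dd_consistent: assumes "0 \<le> \<delta>" "\<delta> \<le> D"
  shows "consistent_profile n (dd n k g \<delta> D) (prof n k)"
  unfolding consistent_profile_def
proof (intro allI impI conjI)
  fix x assume x: "x < n"
  show "distinct (prof n k x)" unfolding prof_def by simp
  show "set (prof n k x) = {0..<n}" unfolding prof_def by simp
  fix i j assume ij: "i < j \<and> j < n"
  have len: "length (prof n k x) = n" unfolding prof_def by simp
  have s: "sorted (map (rk k x) (prof n k x))" unfolding prof_def by (rule sorted_sort_key)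
  have "rk k x (prof n k x ! i) \<le> rk k x (prof n k x ! j)"
    using sorted_nth_mono[OF s, of i j] ij len by simp
  moreover have "prof n k x ! i < n" "prof n k x ! j < n"
    using ij len nth_mem[of i "prof n k x"] nth_mem[of j "prof n k x"] unfolding prof_def by auto
  ultimately show "dd n k g \<delta> D x (prof n k x ! i) \<le> dd n k g \<delta> D x (prof n k x ! j)"
    using dd_mono[OF assms x] by blast
qed

primrec qlist :: "qalg \<Rightarrow> (nat \<Rightarrow> nat \<Rightarrow> real) \<Rightarrow> (nat \<times> nat) list" where
  "qlist (Output F) d = []"
| "qlist (Query x y k) d = (x, y) # qlist (k (d x y)) d"

lemma length_qlist: "length (qlist T d) = num_queries T d"
  by (induction T) auto

lemma run_same: "(\<forall>(x,y)\<in>set (qlist T d1). d1 x y = d2 x y) \<Longrightarrow> run_output T d2 = run_output T d1"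
  by (induction T) auto


lemma dd_nonneg: "0 \<le> \<delta> \<Longrightarrow> \<delta> \<le> D \<Longrightarrow> 0 \<le> dd n k g \<delta> D x y"
  unfolding dd_def by auto

lemma cost_ge_card:
  assumes "F \<subseteq> {0..<n}" "F \<noteq> {}" "0 \<le> \<delta>" "\<delta> \<le> D"
  shows "real (card F) \<le> fl_cost n (dd n k g \<delta> D) 1 F"
proof -
  have fin: "finite F" using assms(1) finite_subset by blast
  have "\<forall>x. 0 \<le> Min ((\<lambda>c. dd n k g \<delta> D x c) ` F)"
    using fin assms dd_nonneg by (simp add: Min_ge_iff)
  hence "0 \<le> (\<Sum>x<n. Min ((\<lambda>c. dd n k g \<delta> D x c) ` F))" by (simp add: sum_nonneg)
  thus ?thesis unfolding fl_cost_def by simp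
qed

lemma cost_ge_D:
  assumes "F \<subseteq> {0..<n}" "F \<noteq> {}" "0 \<le> \<delta>" "\<delta> \<le> D" "x < n" "x div k = g" "x \<notin> F"
  shows "D \<le> fl_cost n (dd n k g \<delta> D) 1 F"
proof -
  have fin: "finite F" using assms(1) finite_subset by blast
  have img: "(\<lambda>c. dd n k g \<delta> D x c) ` F = {D}"
  proof -
    have "\<forall>c\<in>F. dd n k g \<delta> D x c = D" using assms unfolding dd_def by auto
    thus ?thesis using assms(2) by auto
  qed
  have "\<forall>y. 0 \<le> Min ((\<lambda>c. dd n k g \<delta> D y c) ` F)"
    using fin assms dd_nonneg by (simp add: Min_ge_iff)
  hence "Min ((\<lambda>c. dd n k g \<delta> D x c) ` F) \<le> (\<Sum>y<n. Min ((\<lambda>c. dd n k g \<delta> D y c) ` F))"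
    using assms(5) by (intro member_le_sum) auto
  thus ?thesis using img unfolding fl_cost_def by simp
qed

lemma opt_le:
  assumes "g < n div k" "0 < k" "0 \<le> \<delta>" "\<delta> \<le> D"
  shows "fl_opt n (dd n k g \<delta> D) 1 \<le> real n * \<delta> + real (n div k + 1 + k)"
proof -
  define F where "F = {y. y < n \<and> y mod k = 0} \<union> {g*k..<g*k+k}"
  have gk: "g*k+k \<le> n"
  proof -
    have "(g+1)*k \<le> (n div k) * k" using assms by (intro mult_le_mono1) auto
    also have "\<dots> \<le> n" by simp
    finally show ?thesis by (simp add: algebra_simps)
  qed
  have Fsub: "F \<subseteq> {0..<n}" unfolding F_def using gk by auto
  have Fne: "F \<noteq> {}" unfolding F_def using assms gk by auto
  have fin: "finite F" using Fsub finite_subset by blast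
  have c1: "{y. y < n \<and> y mod k = 0} \<subseteq> (\<lambda>j. j*k) ` {..<n div k + 1}"
  proof
    fix y assume y: "y \<in> {y. y < n \<and> y mod k = 0}"
    hence "y = (y div k) * k" by auto
    moreover have "y div k < n div k + 1" using y div_le_mono[of y n k] by auto
    ultimately show "y \<in> (\<lambda>j. j*k) ` {..<n div k + 1}" by blast
  qed
  have "card {y. y < n \<and> y mod k = 0} \<le> n div k + 1"
    using card_mono[OF _ c1] card_image_le[of "{..<n div k + 1}" "\<lambda>j. j*k"] by fastforce
  hence cardF: "card F \<le> n div k + 1 + k"
    unfolding F_def using card_Un_le[of "{y. y < n \<and> y mod k = 0}" "{g*k..<g*k+k}"] by simp
  have sum: "(\<Sum>x<n. Min ((\<lambda>c. dd n k g \<delta> D x c) ` F)) \<le> (\<Sum>x<n. \<delta>)"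
  proof (rule sum_mono)
    fix x assume x: "x \<in> {..<n}"
    define r where "r = (if x div k = g then x else x - x mod k)"
    have rF: "r \<in> F"
    proof (cases "x div k = g")
      case True
      hence "g*k \<le> x" "x < g*k+k" using assms(2)
        by (metis div_times_less_eq_dividend mult.commute) 
           (metis True add.commute assms(2) dividend_less_div_times mult.commute)
      thus ?thesis unfolding r_def F_def using True by auto
    next
      case False
      have "k * (x div k) \<le> x" by (metis div_times_less_eq_dividend mult.commute)
      hence "k * (x div k) < n" using x by (meson le_less_trans lessThan_iff)
      hence "k * (x div k) \<in> {y. y < n \<and> y mod k = 0}" by simp
      thus ?thesis unfolding r_def F_def using False by (simp add: minus_mod_eq_mult_div)
    qed
    have "dd n k g \<delta> D x r \<le> \<delta>"
    proof (cases "x div k = g")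
      case True thus ?thesis unfolding r_def dd_def using assms by auto
    next
      case False
      have "r < n" using rF Fsub by auto
      moreover have "r div k = x div k" unfolding r_def using False
        by (simp add: minus_mod_eq_mult_div)
      ultimately show ?thesis unfolding dd_def using False x assms by auto
    qed
    moreover have "Min ((\<lambda>c. dd n k g \<delta> D x c) ` F) \<le> dd n k g \<delta> D x r"
      using fin rF by (intro Min_le) auto
    ultimately show "Min ((\<lambda>c. dd n k g \<delta> D x c) ` F) \<le> \<delta>" by linarith
  qed
  have "fl_opt n (dd n k g \<delta> D) 1 \<le> fl_cost n (dd n k g \<delta> D) 1 F"
    unfolding fl_opt_def
  proof (rule Min_le)
    have "{fl_cost n (dd n k g \<delta> D) 1 F | F. F \<noteq> {} \<and> F \<subseteq> {0..<n}}
        = fl_cost n (dd n k g \<delta> D) 1 ` {F. F \<noteq> {} \<and> F \<subseteq> {0..<n}}" by auto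
    thus "finite {fl_cost n (dd n k g \<delta> D) 1 F | F. F \<noteq> {} \<and> F \<subseteq> {0..<n}}" by simp
    show "fl_cost n (dd n k g \<delta> D) 1 F \<in> {fl_cost n (dd n k g \<delta> D) 1 F | F. F \<noteq> {} \<and> F \<subseteq> {0..<n}}"
      using Fne Fsub by blast
  qed
  also have "\<dots> \<le> real n * \<delta> + real (n div k + 1 + k)"
    unfolding fl_cost_def using sum cardF by (simp add: of_nat_mono add_mono)
  finally show ?thesis .
qed


lemma arith_main:
  fixes p \<alpha> :: real and n k m :: nat
  assumes p: "0 < p" "p \<le> 1" and a: "1 \<le> \<alpha>" and k: "k = nat \<lceil>2*\<alpha>/p\<rceil>"
    and n: "real n > 12*\<alpha>*(\<alpha>+2)/p^2" and m: "m = n div k"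
  shows "real m * p > p^2/12 * real n / \<alpha> + \<alpha> * real (m+k+2) / real k"
proof -
  define K where "K = real k"
  have K1: "K \<ge> 2*\<alpha>/p" unfolding K_def k by linarith
  have ap: "\<alpha>/p \<ge> 1" using p a by (simp add: field_simps)
  have K2: "K \<le> 3*\<alpha>/p" unfolding K_def k using ap by linarith
  have Kpos: "K > 0" using K1 ap by linarith
  have kpos: "k > 0" using Kpos K_def by simp
  have "n < (m+1)*k" using m kpos
    by (metis add.commute dividend_less_div_times mult.commute mult_Suc plus_1_eq_Suc)
  hence "real n < (real m + 1) * K" unfolding K_def by (metis of_nat_1 of_nat_add of_nat_less_iff of_nat_mult)
  hence mge: "real m \<ge> real n / K - 1" using Kpos by (simp add: field_simps)
  have h1: "\<alpha> * real m / K \<le> real m * p / 2"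
  proof -
    have "\<alpha> / K \<le> p/2" using K1 Kpos p by (simp add: field_simps)
    hence "real m * (\<alpha>/K) \<le> real m * (p/2)" by (intro mult_left_mono) auto
    thus ?thesis by (simp add: mult.commute mult.left_commute)
  qed
  have h2: "\<alpha> * real (k+2) / K \<le> \<alpha> + 1"
  proof -
    have "2*\<alpha>/K \<le> p" using K1 Kpos p by (simp add: field_simps)
    moreover have "\<alpha> * real (k+2) / K = \<alpha> + 2*\<alpha>/K" unfolding K_def using Kpos K_def
      by (simp add: field_simps)
    ultimately show ?thesis using p by linarith
  qed
  have split: "\<alpha> * real (m+k+2) / real k = \<alpha> * real m / K + \<alpha> * real (k+2) / K"
    unfolding K_def by (simp add: add_divide_distrib[symmetric] algebra_simps)
  have h3: "real n / K \<ge> real n * p / (3*\<alpha>)"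
  proof -
    have "real n / K \<ge> real n / (3*\<alpha>/p)" using K2 Kpos p a by (intro divide_left_mono) auto
    thus ?thesis using p a by (simp add: field_simps)
  qed
  have "real m * p / 2 \<ge> (real n * p / (3*\<alpha>) - 1) * p / 2"
    using mge h3 p by (intro divide_right_mono mult_right_mono) auto
  hence h4: "real m * p / 2 \<ge> p^2 * real n / (6*\<alpha>) - p/2"
    using a by (simp add: field_simps power2_eq_square)
  have h5: "p^2 * real n / (12*\<alpha>) > \<alpha> + 2"
    using n p a by (simp add: field_simps)
  have "p^2/12 * real n / \<alpha> = p^2 * real n / (12*\<alpha>)" by simp
  moreover have "p^2 * real n / (6*\<alpha>) = 2 * (p^2 * real n / (12*\<alpha>))" by simp
  ultimately show ?thesis using split h1 h2 h4 h5 p by linarith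
qed


lemma blk: "0 < k \<Longrightarrow> {x::nat. x div k = g} = {g*k..<g*k+k}"
  apply (auto simp: div_nat_eqI dividend_less_div_times div_times_less_eq_dividend mult.commute)
  by (metis add_less_cancel_left mod_less_divisor mult_div_mod_eq)


theorem mainTheorem13:
  fixes p :: real
  assumes "0 < p" and "p \<le> 1"
  shows "\<exists>c>0. \<forall>\<alpha>::real. \<alpha> \<ge> 1 \<longrightarrow> (\<exists>N::nat. \<forall>n\<ge>N.
           \<forall>(M::'r measure) (A :: nat \<Rightarrow> (nat \<Rightarrow> nat list) \<Rightarrow> real \<Rightarrow> 'r \<Rightarrow> qalg).
             prob_space M \<and> approx_succeeds M A n \<alpha> p \<longrightarrow>
             (\<exists>d \<pi> f. fl_instance n d \<pi> f \<and>
                \<not> (AE \<omega> in M. real (num_queries (A n \<pi> f \<omega>) d) < c * real n / \<alpha>)))"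
proof -
  define c where "c = p^2/12"
  have cpos: "c > 0" unfolding c_def using assms by simp
  show ?thesis
  proof (intro exI[of _ c] conjI allI impI)
    show "c > 0" by (rule cpos)
    fix \<alpha> :: real assume a: "1 \<le> \<alpha>"
    define k where "k = nat \<lceil>2*\<alpha>/p\<rceil>"
    define N where "N = nat \<lceil>12*\<alpha>*(\<alpha>+2)/p^2\<rceil> + 1"
    show "\<exists>N::nat. \<forall>n\<ge>N.
           \<forall>(M::'r measure) (A :: nat \<Rightarrow> (nat \<Rightarrow> nat list) \<Rightarrow> real \<Rightarrow> 'r \<Rightarrow> qalg).
             prob_space M \<and> approx_succeeds M A n \<alpha> p \<longrightarrow>
             (\<exists>d \<pi> f. fl_instance n d \<pi> f \<and>
                \<not> (AE \<omega> in M. real (num_queries (A n \<pi> f \<omega>) d) < c * real n / \<alpha>))"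
    proof (intro exI[of _ N] allI impI)
      fix n :: nat and M :: "'r measure" and A :: "nat \<Rightarrow> (nat \<Rightarrow> nat list) \<Rightarrow> real \<Rightarrow> 'r \<Rightarrow> qalg"
      assume nN: "N \<le> n" and H: "prob_space M \<and> approx_succeeds M A n \<alpha> p"
      interpret P: prob_space M using H by simp
      have nreal: "real n > 12*\<alpha>*(\<alpha>+2)/p^2"
      proof -
        have "real N > 12*\<alpha>*(\<alpha>+2)/p^2" unfolding N_def by linarith
        thus ?thesis using nN by (meson less_le_trans of_nat_le_iff)
      qed
      have npos: "n > 0"
      proof -
        have "12*\<alpha>*(\<alpha>+2)/p^2 \<ge> 0" using a by simp
        hence "real n > 0" using nreal by linarith
        thus ?thesis by simp
      qed
      have kpos: "k > 0"
      proof -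
        have "2*\<alpha>/p > 0" using a assms by simp
        thus ?thesis unfolding k_def by linarith
      qed
      define m where "m = n div k"
      define \<delta> where "\<delta> = 1 / real n"
      define D where "D = \<alpha> * real (m+k+2)"
      define \<pi> where "\<pi> = prof n k"
      have \<delta>pos: "0 < \<delta>" unfolding \<delta>_def using npos by simp
      have \<delta>1: "\<delta> \<le> 1" unfolding \<delta>_def using npos by simp
      have D2: "D \<ge> 2"
      proof -
        have "real (m+k+2) \<ge> 2" by simp
        hence "\<alpha> * real (m+k+2) \<ge> 1 * 2" using a by (intro mult_mono) auto
        thus ?thesis unfolding D_def by simp
      qed
      have \<delta>D: "\<delta> \<le> D" using \<delta>1 D2 by linarith
      have nd: "real n * \<delta> = 1" unfolding \<delta>_def using npos by simp
      have inst: "\<And>g. fl_instance n (dd n k g \<delta> D) \<pi> 1"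
        unfolding fl_instance_def \<pi>_def using dd_metric[OF \<delta>pos \<delta>D] dd_consistent \<delta>pos \<delta>D by auto
      show "\<exists>d \<pi> f. fl_instance n d \<pi> f \<and>
                \<not> (AE \<omega> in M. real (num_queries (A n \<pi> f \<omega>) d) < c * real n / \<alpha>)"
      proof (rule ccontr)
        assume "\<not> ?thesis"
        hence AEq: "AE \<omega> in M. real (num_queries (A n \<pi> 1 \<omega>) (dd n k n \<delta> D)) < c * real n / \<alpha>"
          using inst by blast
        have "\<forall>g. \<exists>E. g < m \<longrightarrow> (E \<in> sets M \<and> measure M E \<ge> p \<and>
           (\<forall>\<omega>\<in>E. let F = run_output (A n \<pi> 1 \<omega>) (dd n k g \<delta> D) in
               F \<noteq> {} \<and> F \<subseteq> {0..<n} \<and> fl_cost n (dd n k g \<delta> D) 1 F < \<alpha> * fl_opt n (dd n k g \<delta> D) 1))"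
          using H inst unfolding approx_succeeds_def by blast
        then obtain E where E: "\<And>g. g < m \<Longrightarrow> E g \<in> sets M \<and> measure M (E g) \<ge> p \<and>
           (\<forall>\<omega>\<in>E g. let F = run_output (A n \<pi> 1 \<omega>) (dd n k g \<delta> D) in
               F \<noteq> {} \<and> F \<subseteq> {0..<n} \<and> fl_cost n (dd n k g \<delta> D) 1 F < \<alpha> * fl_opt n (dd n k g \<delta> D) 1)"
          using choice[of "\<lambda>g E. g < m \<longrightarrow> (E \<in> sets M \<and> measure M E \<ge> p \<and>
           (\<forall>\<omega>\<in>E. let F = run_output (A n \<pi> 1 \<omega>) (dd n k g \<delta> D) in
               F \<noteq> {} \<and> F \<subseteq> {0..<n} \<and> fl_cost n (dd n k g \<delta> D) 1 F < \<alpha> * fl_opt n (dd n k g \<delta> D) 1))"]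
          by blast
        define Qg where "Qg \<omega> = (\<lambda>(x,y). x div k) ` set (qlist (A n \<pi> 1 \<omega>) (dd n k n \<delta> D))" for \<omega>
        define FT where "FT \<omega> = run_output (A n \<pi> 1 \<omega>) (dd n k n \<delta> D)" for \<omega>
        have key: "{x. x div k = g} \<subseteq> FT \<omega> \<and> real (card (FT \<omega>)) < D \<and> FT \<omega> \<subseteq> {0..<n}"
          if g: "g < m" and w: "\<omega> \<in> E g" and gq: "g \<notin> Qg \<omega>" for g \<omega>
        proof -
          have same: "run_output (A n \<pi> 1 \<omega>) (dd n k g \<delta> D) = FT \<omega>"
            unfolding FT_def
          proof (rule run_same, intro ballI)
            fix z assume z: "z \<in> set (qlist (A n \<pi> 1 \<omega>) (dd n k n \<delta> D))"
            obtain x y where xy: "z = (x,y)" by fastforce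
            have "x div k \<noteq> g" using gq z xy unfolding Qg_def by force
            moreover have "x < n \<Longrightarrow> x div k \<noteq> n"
              using div_le_dividend[of x k] by linarith
            ultimately show "case z of (x, y) \<Rightarrow> dd n k n \<delta> D x y = dd n k g \<delta> D x y"
              unfolding xy dd_def by auto
          qed
          have succ: "FT \<omega> \<noteq> {}" "FT \<omega> \<subseteq> {0..<n}"
              "fl_cost n (dd n k g \<delta> D) 1 (FT \<omega>) < \<alpha> * fl_opt n (dd n k g \<delta> D) 1"
            using E[OF g] w same by (auto simp: Let_def)
          have "fl_opt n (dd n k g \<delta> D) 1 \<le> real n * \<delta> + real (n div k + 1 + k)"
            using opt_le[of g n k \<delta> D] g kpos \<delta>pos \<delta>D unfolding m_def by simp
          hence "\<alpha> * fl_opt n (dd n k g \<delta> D) 1 \<le> D"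
            unfolding D_def nd m_def using a by (intro mult_left_mono) auto
          hence cD: "fl_cost n (dd n k g \<delta> D) 1 (FT \<omega>) < D" using succ by linarith
          have "real (card (FT \<omega>)) < D"
            using cost_ge_card[OF succ(2,1), of \<delta> D k g] \<delta>pos \<delta>D cD by linarith
          moreover have "{x. x div k = g} \<subseteq> FT \<omega>"
          proof
            fix x assume x: "x \<in> {x. x div k = g}"
            have "g*k + k \<le> n"
            proof -
              have "(g+1)*k \<le> m * k" using g by (intro mult_le_mono1) auto
              also have "\<dots> \<le> n" unfolding m_def by simp
              finally show ?thesis by (simp add: algebra_simps)
            qed
            hence xn: "x < n" using x blk[OF kpos, of g] by auto
            show "x \<in> FT \<omega>"
            proof (rule ccontr)
              assume "x \<notin> FT \<omega>"
              hence "D \<le> fl_cost n (dd n k g \<delta> D) 1 (FT \<omega>)"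
                using cost_ge_D[OF succ(2,1), of \<delta> D x k g] \<delta>pos \<delta>D xn x by auto
              thus False using cD by linarith
            qed
          qed
          ultimately show ?thesis using succ by blast
        qed
        define B where "B = c * real n / \<alpha> + D / real k"
        have count: "(\<Sum>g<m. indicator (E g) \<omega> :: real) \<le> B"
          if qw: "real (num_queries (A n \<pi> 1 \<omega>) (dd n k n \<delta> D)) < c * real n / \<alpha>" for \<omega>
        proof -
          define S where "S = {..<m} \<inter> {g. \<omega> \<in> E g}"
          define C where "C = {g \<in> S. g \<notin> Qg \<omega>}"
          have sumS: "(\<Sum>g<m. indicator (E g) \<omega> :: real) = real (card S)"
            unfolding S_def indicator_def by (simp add: sum.If_cases)
          have finQ: "finite (Qg \<omega>)" unfolding Qg_def by simp
          have "card (Qg \<omega>) \<le> num_queries (A n \<pi> 1 \<omega>) (dd n k n \<delta> D)"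
            unfolding Qg_def length_qlist[symmetric]
            by (rule order_trans[OF card_image_le card_length]) simp
          hence cQ: "real (card (Qg \<omega>)) < c * real n / \<alpha>" using qw by linarith
          have "S \<subseteq> Qg \<omega> \<union> C" unfolding C_def by auto
          hence "card S \<le> card (Qg \<omega> \<union> C)"
            using finQ by (intro card_mono) (auto simp: C_def S_def)
          also have "\<dots> \<le> card (Qg \<omega>) + card C" by (rule card_Un_le)
          finally have cS: "real (card S) \<le> real (card (Qg \<omega>)) + real (card C)" by linarith
          have cC: "real (card C) \<le> D / real k"
          proof (cases "C = {}")
            case True thus ?thesis using D2 by simp
          next
            case False
            then obtain g0 where g0: "g0 \<in> C" by blast
            have k0: "FT \<omega> \<subseteq> {0..<n}" "real (card (FT \<omega>)) < D"
              using key[of g0 \<omega>] g0 unfolding C_def S_def by auto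
            have finC: "finite C" unfolding C_def S_def by simp
            have sub: "(\<Union>g\<in>C. {x. x div k = g}) \<subseteq> FT \<omega>"
              using key unfolding C_def S_def by blast
            have "card (\<Union>g\<in>C. {x. x div k = g}) = (\<Sum>g\<in>C. card {x. x div k = g})"
            proof (rule card_UN_disjoint)
              show "finite C" by (rule finC)
              show "\<forall>g\<in>C. finite {x. x div k = g}" using blk[OF kpos] by simp
              show "\<forall>g\<in>C. \<forall>j\<in>C. g \<noteq> j \<longrightarrow> {x. x div k = g} \<inter> {x. x div k = j} = {}" by auto
            qed
            also have "\<dots> = card C * k" using blk[OF kpos] by simp
            finally have "card C * k \<le> card (FT \<omega>)"
              using sub k0(1) by (metis card_mono finite_atLeastLessThan finite_subset)
            hence "real (card C) * real k < D" using k0(2)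
              by (metis of_nat_le_iff of_nat_mult order_le_less_trans)
            thus ?thesis using kpos by (simp add: field_simps)
          qed
          show ?thesis using sumS cS cQ cC unfolding B_def by linarith
        qed
        have Esets: "\<And>g. g < m \<Longrightarrow> E g \<in> sets M" using E by blast
        have intE: "integrable M (indicator (E g) :: 'r \<Rightarrow> real)" if "g < m" for g
        proof (rule Bochner_Integration.integrable_real_indicator)
          show "E g \<in> sets M" using Esets[OF that] .
          show "emeasure M (E g) < \<infinity>" using P.emeasure_finite[of "E g"] by (simp add: less_top[symmetric])
        qed
        have int1: "integral\<^sup>L M (\<lambda>\<omega>. \<Sum>g<m. indicator (E g) \<omega> :: real) = (\<Sum>g<m. measure M (E g))"
        proof -
          have "integral\<^sup>L M (\<lambda>\<omega>. \<Sum>g<m. indicator (E g) \<omega> :: real) = (\<Sum>g<m. integral\<^sup>L M (indicator (E g) :: 'r \<Rightarrow> real))"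
            by (rule Bochner_Integration.integral_sum[where I="{..<m}" and f="\<lambda>g. indicator (E g) :: 'r \<Rightarrow> real"])
               (rule intE, simp)
          also have "\<dots> = (\<Sum>g<m. measure M (E g))"
            using Esets sets.sets_into_space by (intro sum.cong) (auto simp: Int_absorb2)
          finally show ?thesis .
        qed
        have "integral\<^sup>L M (\<lambda>\<omega>. \<Sum>g<m. indicator (E g) \<omega> :: real) \<le> integral\<^sup>L M (\<lambda>\<omega>. B)"
        proof (rule Bochner_Integration.integral_mono_AE)
          show "integrable M (\<lambda>\<omega>. \<Sum>g<m. indicator (E g) \<omega> :: real)"
            using intE by (intro Bochner_Integration.integrable_sum) auto
          show "integrable M (\<lambda>\<omega>. B)" by simp
          show "AE \<omega> in M. (\<Sum>g<m. indicator (E g) \<omega> :: real) \<le> B"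
            using AEq by eventually_elim (rule count)
        qed
        hence "(\<Sum>g<m. measure M (E g)) \<le> B" using int1 by (simp add: P.prob_space)
        moreover have "real m * p \<le> (\<Sum>g<m. measure M (E g))"
        proof -
          have "(\<Sum>g<m. p) \<le> (\<Sum>g<m. measure M (E g))" using E by (intro sum_mono) auto
          thus ?thesis by simp
        qed
        moreover have "real m * p > p^2/12 * real n / \<alpha> + \<alpha> * real (m+k+2) / real k"
          using arith_main[OF assms a k_def nreal m_def] .
        ultimately show False unfolding B_def c_def D_def by linarith
      qed
    qed
  qed
qed

end
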